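(* Let ${\mathcal R}$ be a similarity relation, $\mu$ a cut value, and $t,s$ higher-order patterns. If $\mathsf{HOPSU}$, started on $\{t\simeq^?_{{\mathcal R},\mu}s\};\varepsilon;1$, stops with a configuration $\emptyset;\sigma;\mathfrak{d}$, then $\mathfrak{d}\ge\mu$ and ${\mathcal R}(t\sigma,s\sigma)=\mathfrak{d}$, i.e. $\sigma$ is an $({\mathcal R},\mu)$-unifier of $t$ and $s$ with degree $\mathfrak{d}$.
   Context: Terms: simply typed $\lambda$-terms over disjoint countably infinite sets $\mathcal{V}$ (typed variables) and $\mathcal{F}$ (typed constants), types $\tau::=\delta\mid\tau\to\tau$. Terms are identified modulo $\alpha$, kept $\beta$-normal, and $\eta$-expanded except that arguments of free variables are kept $\eta$-normal (i.e. are bound variables); a term is written $\lambda x_1,\dots,x_n.h(t_1,\dots,t_m)$ with head $h$. Free variables are written $F,G,H,X,Y,\dots$, bound variables $x,y,z,\dots$. A higher-order pattern is a term where every free variable occurrence is applied to a list of pairwise distinct bound variables; all terms in problems and substitutions are higher-order patterns. Substitutions $\sigma$ are type-preserving maps with finite domain $\mathit{Dom}(\sigma)=\{X\mid X\sigma\neq X\}$, applied postfix ($t\sigma$, capture-avoiding, followed by $\beta$-normalization); $\sigma\vartheta$ means first $\sigma$ then $\vartheta$; $\varepsilon$ is the identity; $\varphi|_V$ is the restriction to $V$; $\mathtt{fv}(t)$ is the set of free variables. Fuzzy setting: T-norm $\wedge=\min$. ${\mathcal R}_A$ is a similarity relation (reflexive, symmetric, min-transitive map to $[0,1]$) on $\mathcal{F}\cup\mathcal{V}$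 with ${\mathcal R}_A(x,y)=0$ for distinct variables, ${\mathcal R}_A(f,g)=0$ for constants of different types, ${\mathcal R}_A(x,f)=0$ for a variable and a constant. It induces ${\mathcal R}$ on terms: on normal forms ${\mathcal R}(a,b)={\mathcal R}_A(a,b)$ for symbols, ${\mathcal R}((t_1\,s_1),(t_2\,s_2))={\mathcal R}(t_1,t_2)\wedge{\mathcal R}(s_1,s_2)$, ${\mathcal R}(\lambda x.t,\lambda y.s)={\mathcal R}(t\{x\mapsto z\},s\{y\mapsto z\})$ for fresh $z$ of the same type, $0$ otherwise. A cut value is $\mu\in(0,1]$. An equation is written $t\simeq^?_{{\mathcal R},\mu}s$; a unification problem is a finite set of equations. A substitution $\sigma$ is an $({\mathcal R},\mu)$-unifier of $\{t_1\simeq^?_{{\mathcal R},\mu}s_1,\dots,t_n\simeq^?_{{\mathcal R},\mu}s_n\}$ with degree $\mathfrak{d}$ if ${\mathcal R}(t_1\sigma,s_1\sigma)\wedge\dots\wedge{\mathcal R}(t_n\sigma,s_n\sigma)=\mathfrak{d}\ge\mu$. Algorithm $\mathsf{HOPSU}$: it works on configurations $P;\sigma;\mathfrak{d}$ ($P$ a problem, $\sigma$ a substitution, $\mathfrak{d}\ge\mu$ a degree) or $\bot$, applying the following rules to a selected equation as long as possible ($\uplus$ is disjoint union): (Abs) $\{\lambda x.t\simeq^?\lambda x.s\}\uplus P;\sigma;\mathfrak{d}\leadsto\{t\simeq^?s\}\cup P;\sigma;\mathfrak{d}$. (Dec) $\{f(t_1,\dots,t_n)\simeq^?g(s_1,\dots,s_n)\}\uplus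 P;\sigma;\mathfrak{d}\leadsto\{t_1\simeq^?s_1,\dots,t_n\simeq^?s_n\}\cup P;\sigma;\mathfrak{d}\wedge{\mathcal R}(f,g)$, where $f,g$ are rigid heads, $n\ge0$, and $\mathfrak{d}\wedge{\mathcal R}(f,g)\ge\mu$. (SV) $\{F(x_1,\dots,x_n)\simeq^?F(y_1,\dots,y_n)\}\uplus P;\sigma;\mathfrak{d}\leadsto P\vartheta;\sigma\vartheta;\mathfrak{d}$, where $\{z_1,\dots,z_m\}=\{x_i\mid x_i=y_i\}$ and $\vartheta=\{F\mapsto\lambda x_1,\dots,x_n.H(z_1,\dots,z_m)\}$ with $H$ fresh. (Ori) $\{a(s_1,\dots,s_m)\simeq^?F(x_1,\dots,x_n)\}\uplus P;\sigma;\mathfrak{d}\leadsto\{F(x_1,\dots,x_n)\simeq^?a(s_1,\dots,s_m)\}\cup P;\sigma;\mathfrak{d}$, where $F$ is free and $a$ is a constant or $a\in\{x_1,\dots,x_n\}$. (LF) $\{F(x_1,\dots,x_n)\simeq^?a(s_1,\dots,s_m)\}\uplus P;\sigma;\mathfrak{d}\leadsto P\vartheta;\sigma\vartheta;\mathfrak{d}$, where $F\notin\mathtt{fv}(a(s_1,\dots,s_m))$, $a$ is a constant, a free variable, or in $\{x_1,\dots,x_n\}$, $\mathsf{VarElim}(F(x_1,\dots,x_n),a(s_1,\dots,s_m))=\varphi$, and $\vartheta=\varphi|_V$ with $V=\{F\}\cup\mathtt{fv}(a(s_1,\dots,s_m))$. (Fail) $\{t\simeq^?s\}\uplus P;\sigma;\mathfrak{d}\leadsto\bot$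 if no other rule applies to the selected equation. $\mathsf{VarElim}(t,s)$ starts from $\{t\simeq^?s\};\varepsilon$ and applies as long as possible: (VE1) $\{F(x_1,\dots,x_n)\simeq^?a(s_1,\dots,s_m)\}\uplus P;\sigma\leadsto\{H_1(x_1,\dots,x_n)\simeq^?s_1,\dots,H_m(x_1,\dots,x_n)\simeq^?s_m\}\cup P;\sigma\vartheta$, where $a$ is a constant or in $\{x_1,\dots,x_n\}$, $\vartheta=\{F\mapsto\lambda x_1,\dots,x_n.a(H_1(x_1,\dots,x_n),\dots,H_m(x_1,\dots,x_n))\}$ with $H_i$ fresh of appropriate types; (VE2) $\{F(x_1,\dots,x_n)\simeq^?G(y_1,\dots,y_m)\}\uplus P;\sigma\leadsto P\vartheta;\sigma\vartheta$, where $\{x_1,\dots,x_n\}\cap\{y_1,\dots,y_m\}=\{z_1,\dots,z_k\}$ and $\vartheta=\{F\mapsto\lambda x_1,\dots,x_n.H(z_1,\dots,z_k),G\mapsto\lambda y_1,\dots,y_m.H(z_1,\dots,z_k)\}$ with $H$ fresh. If it ends in $\emptyset;\varphi$, then $\mathsf{VarElim}(t,s)=\varphi$. *)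

theory Defs
  imports Complex_Main
begin

datatype ty = Base nat | Fun ty ty

type_synonym const = "nat \<times> ty"
type_synonym fvar = "nat \<times> ty"

fun arg_tys :: "ty \<Rightarrow> ty list" where
  "arg_tys (Base b) = []"
| "arg_tys (Fun A B) = A # arg_tys B"

fun res_ty :: "ty \<Rightarrow> ty" where
  "res_ty (Base b) = Base b"
| "res_ty (Fun A B) = res_ty B"

definition arrows :: "ty list \<Rightarrow> ty \<Rightarrow> ty" where
  "arrows Ts B = foldr Fun Ts B"

section \<open>Terms in beta-normal, eta-long form (de Bruijn indices for bound variables)\<close>

datatype hd = Cn const | Bv nat

text \<open>A normal form is a lambda (with binder type), a rigid head applied to a list of
  arguments, or a free variable applied to a list of bound variables (kept eta-normal).\<close>
datatype tm = Lam ty tm | App hd "tm list" | FApp fvar "nat list"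

definition lams :: "ty list \<Rightarrow> tm \<Rightarrow> tm" where
  "lams Ts t = foldr Lam Ts t"

text \<open>Typing in context \<open>\<Gamma>\<close> (index 0 = innermost binder). The judgement only admits
  beta-normal, eta-long higher-order patterns: applications are of base type and free
  variables are applied to pairwise distinct bound variables.\<close>
inductive wt :: "ty list \<Rightarrow> tm \<Rightarrow> ty \<Rightarrow> bool" where
  wt_Lam: "wt (T # \<Gamma>) t U \<Longrightarrow> wt \<Gamma> (Lam T t) (Fun T U)"
| wt_Cn: "snd c = arrows Ts (Base b) \<Longrightarrow> list_all2 (wt \<Gamma>) ts Ts
          \<Longrightarrow> wt \<Gamma> (App (Cn c) ts) (Base b)"
| wt_Bv: "i < length \<Gamma> \<Longrightarrow> \<Gamma> ! i = arrows Ts (Base b) \<Longrightarrow> list_all2 (wt \<Gamma>) ts Ts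
          \<Longrightarrow> wt \<Gamma> (App (Bv i) ts) (Base b)"
| wt_FApp: "distinct xs \<Longrightarrow> (\<forall>x\<in>set xs. x < length \<Gamma>)
          \<Longrightarrow> snd F = arrows (map ((!) \<Gamma>) xs) (Base b)
          \<Longrightarrow> wt \<Gamma> (FApp F xs) (Base b)"

definition hopattern :: "tm \<Rightarrow> ty \<Rightarrow> bool" where
  "hopattern t T \<longleftrightarrow> wt [] t T"

fun fv :: "tm \<Rightarrow> fvar set" where
  "fv (Lam T t) = fv t"
| "fv (App h ts) = (\<Union>t\<in>set ts. fv t)"
| "fv (FApp F xs) = {F}"

definition lift :: "(nat \<Rightarrow> nat) \<Rightarrow> nat \<Rightarrow> nat" where
  "lift \<rho> k = (case k of 0 \<Rightarrow> 0 | Suc j \<Rightarrow> Suc (\<rho> j))"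

fun rename :: "(nat \<Rightarrow> nat) \<Rightarrow> tm \<Rightarrow> tm" where
  "rename \<rho> (Lam T t) = Lam T (rename (lift \<rho>) t)"
| "rename \<rho> (App (Cn c) ts) = App (Cn c) (map (rename \<rho>) ts)"
| "rename \<rho> (App (Bv i) ts) = App (Bv (\<rho> i)) (map (rename \<rho>) ts)"
| "rename \<rho> (FApp F xs) = FApp F (map \<rho> xs)"

fun unlam :: "nat \<Rightarrow> tm \<Rightarrow> tm" where
  "unlam 0 t = t"
| "unlam (Suc n) (Lam T t) = unlam n t"
| "unlam (Suc n) t = t"

text \<open>Beta-normal form of \<open>(\<lambda>y1..yn. b) x1 .. xn\<close> for bound variables \<open>xi\<close>:
  the body with \<open>yi\<close> renamed to \<open>xi\<close>.\<close>
definition inst :: "tm \<Rightarrow> nat list \<Rightarrow> tm" where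
  "inst u xs = (let n = length xs in
     rename (\<lambda>k. if k < n then xs ! (n - 1 - k) else k - n) (unlam n u))"

text \<open>Substitutions: finite partial maps (None = identity).\<close>
type_synonym sub = "fvar \<rightharpoonup> tm"

fun app :: "sub \<Rightarrow> tm \<Rightarrow> tm" where
  "app \<sigma> (Lam T t) = Lam T (app \<sigma> t)"
| "app \<sigma> (App h ts) = App h (map (app \<sigma>) ts)"
| "app \<sigma> (FApp F xs) = (case \<sigma> F of None \<Rightarrow> FApp F xs | Some u \<Rightarrow> inst u xs)"

text \<open>Composition: \<open>t (comp \<sigma> \<theta>) = (t \<sigma>) \<theta>\<close> (first \<open>\<sigma>\<close>, then \<open>\<theta>\<close>).\<close>
definition comp :: "sub \<Rightarrow> sub \<Rightarrow> sub" where
  "comp \<sigma> \<theta> = (\<lambda>X. case \<sigma> X of Some u \<Rightarrow> Some (app \<theta> u) | None \<Rightarrow> \<theta> X)"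

definition fv_sub :: "sub \<Rightarrow> fvar set" where
  "fv_sub \<sigma> = dom \<sigma> \<union> (\<Union>u\<in>ran \<sigma>. fv u)"

type_synonym eqn = "tm \<times> tm"

definition fv_eqs :: "eqn set \<Rightarrow> fvar set" where
  "fv_eqs P = (\<Union>(l, r)\<in>P. fv l \<union> fv r)"

definition app_eqs :: "sub \<Rightarrow> eqn set \<Rightarrow> eqn set" where
  "app_eqs \<theta> P = (\<lambda>(l, r). (app \<theta> l, app \<theta> r)) ` P"

text \<open>On variables it is forced to be the identity
  (1 on equal, 0 on distinct variables and between a variable and a constant), so only
  its restriction to constants is a parameter.\<close>
definition similarity :: "(const \<Rightarrow> const \<Rightarrow> real) \<Rightarrow> bool" where
  "similarity R \<longleftrightarrow>
     (\<forall>a b. 0 \<le> R a b \<and> R a b \<le> 1) \<and> (\<forall>a. R a a = 1) \<and> (\<forall>a b. R a b = R b a) \<and>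
     (\<forall>a b c. min (R a b) (R b c) \<le> R a c) \<and> (\<forall>a b. snd a \<noteq> snd b \<longrightarrow> R a b = 0)"

fun simH :: "(const \<Rightarrow> const \<Rightarrow> real) \<Rightarrow> hd \<Rightarrow> hd \<Rightarrow> real" where
  "simH R (Cn c) (Cn d) = R c d"
| "simH R (Bv i) (Bv j) = (if i = j then 1 else 0)"
| "simH R _ _ = 0"

fun simR :: "(const \<Rightarrow> const \<Rightarrow> real) \<Rightarrow> tm \<Rightarrow> tm \<Rightarrow> real"
and simRs :: "(const \<Rightarrow> const \<Rightarrow> real) \<Rightarrow> tm list \<Rightarrow> tm list \<Rightarrow> real" where
  "simR R (Lam T t) (Lam U s) = (if T = U then simR R t s else 0)"
| "simR R (App f ts) (App g ss) = min (simH R f g) (simRs R ts ss)"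
| "simR R (FApp F xs) (FApp G ys) = (if F = G \<and> xs = ys then 1 else 0)"
| "simR R _ _ = 0"
| "simRs R [] [] = 1"
| "simRs R (t # ts) (s # ss) = min (simR R t s) (simRs R ts ss)"
| "simRs R _ _ = 0"

fun idx :: "nat list \<Rightarrow> nat \<Rightarrow> nat" where
  "idx [] x = 0"
| "idx (y # ys) x = (if y = x then 0 else Suc (idx ys x))"

fun rigid_ok :: "nat list \<Rightarrow> hd \<Rightarrow> bool" where
  "rigid_ok xs (Cn c) = True"
| "rigid_ok xs (Bv j) = (j \<in> set xs)"

fun head_ty :: "ty list \<Rightarrow> nat list \<Rightarrow> hd \<Rightarrow> ty" where
  "head_ty Tx xs (Cn c) = snd c"
| "head_ty Tx xs (Bv j) = Tx ! idx xs j"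

text \<open>The head \<open>a\<close> seen inside \<open>\<lambda>x1..xn\<close> (where \<open>xi\<close> has index \<open>n-1-(i-1)\<close>).\<close>
fun head_bind :: "nat list \<Rightarrow> hd \<Rightarrow> hd" where
  "head_bind xs (Cn c) = Cn c"
| "head_bind xs (Bv j) = Bv (length xs - 1 - idx xs j)"

inductive ve_step :: "fvar set \<Rightarrow> eqn set \<times> sub \<Rightarrow> eqn set \<times> sub \<Rightarrow> bool" for A where
  VE1: "(FApp F xs, App a ss) \<in> P \<Longrightarrow> rigid_ok xs a \<Longrightarrow>
        Tx = arg_tys (snd F) \<Longrightarrow> n = length xs \<Longrightarrow>
        Ta = arg_tys (head_ty Tx xs a) \<Longrightarrow> length ss = length Ta \<Longrightarrow>
        length Hs = length ss \<Longrightarrow> distinct Hs \<Longrightarrow>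
        (\<forall>H\<in>set Hs. H \<notin> A \<union> fv_eqs P \<union> fv_sub \<sigma>) \<Longrightarrow>
        (\<forall>i<length ss. snd (Hs ! i) = arrows Tx (Ta ! i)) \<Longrightarrow>
        length bs = length ss \<Longrightarrow>
        (\<forall>i<length ss. ss ! i = lams (arg_tys (Ta ! i)) (bs ! i)) \<Longrightarrow>
        \<theta> = [F \<mapsto> lams Tx (App (head_bind xs a)
               (map (\<lambda>i. let k = length (arg_tys (Ta ! i)) in
                      lams (arg_tys (Ta ! i)) (FApp (Hs ! i) (rev [0..<n + k])))
                    [0..<length ss]))] \<Longrightarrow>
        Q = (\<lambda>i. let k = length (arg_tys (Ta ! i)) in
               (FApp (Hs ! i) (map (\<lambda>j. j + k) xs @ rev [0..<k]), bs ! i)) ` {..<length ss} \<Longrightarrow>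
        ve_step A (P, \<sigma>) (Q \<union> (P - {(FApp F xs, App a ss)}), comp \<sigma> \<theta>)"
| VE2: "(FApp F xs, FApp G ys) \<in> P \<Longrightarrow>
        Tx = arg_tys (snd F) \<Longrightarrow> Ty = arg_tys (snd G) \<Longrightarrow>
        zs = filter (\<lambda>x. x \<in> set ys) xs \<Longrightarrow>
        H \<notin> A \<union> fv_eqs P \<union> fv_sub \<sigma> \<Longrightarrow>
        snd H = arrows (map (\<lambda>z. Tx ! idx xs z) zs) (res_ty (snd F)) \<Longrightarrow>
        \<theta> = [F \<mapsto> lams Tx (FApp H (map (\<lambda>z. length xs - 1 - idx xs z) zs)),
              G \<mapsto> lams Ty (FApp H (map (\<lambda>z. length ys - 1 - idx ys z) zs))] \<Longrightarrow>
        ve_step A (P, \<sigma>) (app_eqs \<theta> (P - {(FApp F xs, FApp G ys)}), comp \<sigma> \<theta>)"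

text \<open>\<open>VarElim(t,s) = \<phi>\<close> (avoiding the variables in \<open>A\<close> when choosing fresh ones).\<close>
definition var_elim :: "fvar set \<Rightarrow> tm \<Rightarrow> tm \<Rightarrow> sub \<Rightarrow> bool" where
  "var_elim A t s \<phi> \<longleftrightarrow> (ve_step A)\<^sup>*\<^sup>* ({(t, s)}, Map.empty) ({}, \<phi>)"

type_synonym config = "eqn set \<times> sub \<times> real"

inductive hopsu_step :: "(const \<Rightarrow> const \<Rightarrow> real) \<Rightarrow> real \<Rightarrow> config \<Rightarrow> config \<Rightarrow> bool"
  for R \<mu> where
  Abs: "(Lam T t, Lam T s) \<in> P \<Longrightarrow>
        hopsu_step R \<mu> (P, \<sigma>, d) (insert (t, s) (P - {(Lam T t, Lam T s)}), \<sigma>, d)"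
| Dec: "(App f ts, App g ss) \<in> P \<Longrightarrow> length ts = length ss \<Longrightarrow>
        min d (simH R f g) \<ge> \<mu> \<Longrightarrow>
        hopsu_step R \<mu> (P, \<sigma>, d)
          (set (zip ts ss) \<union> (P - {(App f ts, App g ss)}), \<sigma>, min d (simH R f g))"
| SV: "(FApp F xs, FApp F ys) \<in> P \<Longrightarrow> length xs = length ys \<Longrightarrow>
        Tx = arg_tys (snd F) \<Longrightarrow>
        ps = filter (\<lambda>p. xs ! p = ys ! p) [0..<length xs] \<Longrightarrow>
        H \<notin> fv_eqs P \<union> fv_sub \<sigma> \<Longrightarrow>
        snd H = arrows (map ((!) Tx) ps) (res_ty (snd F)) \<Longrightarrow>
        \<theta> = [F \<mapsto> lams Tx (FApp H (map (\<lambda>p. length xs - 1 - p) ps))] \<Longrightarrow>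
        hopsu_step R \<mu> (P, \<sigma>, d)
          (app_eqs \<theta> (P - {(FApp F xs, FApp F ys)}), comp \<sigma> \<theta>, d)"
| Ori: "(App a ss, FApp F xs) \<in> P \<Longrightarrow> rigid_ok xs a \<Longrightarrow>
        hopsu_step R \<mu> (P, \<sigma>, d)
          (insert (FApp F xs, App a ss) (P - {(App a ss, FApp F xs)}), \<sigma>, d)"
| LF: "(FApp F xs, r) \<in> P \<Longrightarrow> F \<notin> fv r \<Longrightarrow>
        (\<exists>a ss. r = App a ss \<and> rigid_ok xs a) \<or> (\<exists>G ys. r = FApp G ys) \<Longrightarrow>
        var_elim (fv_eqs P \<union> fv_sub \<sigma>) (FApp F xs) r \<phi> \<Longrightarrow>
        \<theta> = \<phi> |` (insert F (fv r)) \<Longrightarrow>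
        hopsu_step R \<mu> (P, \<sigma>, d) (app_eqs \<theta> (P - {(FApp F xs, r)}), comp \<sigma> \<theta>, d)"

end

theory Submission
  imports Defs
begin


lemma lams_simps[simp]: "lams [] t = t" "lams (T # Ts) t = Lam T (lams Ts t)"
  by (simp_all add: lams_def)

lemma arrows_simps[simp]: "arrows [] B = B" "arrows (T # Ts) B = Fun T (arrows Ts B)"
  by (simp_all add: arrows_def)

lemma arg_tys_arrows[simp]: "arg_tys (arrows Ts B) = Ts @ arg_tys B"
  by (induction Ts) auto

lemma arg_tys_res_ty[simp]: "arg_tys (res_ty T) = []"
  by (induction T) auto

lemma unlam_lams[simp]: "unlam (length Ts) (lams Ts b) = b"
  by (induction Ts) auto

lemma app_lams[simp]: "app \<sigma> (lams Ts b) = lams Ts (app \<sigma> b)"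
  by (induction Ts) auto

lemma fv_lams[simp]: "fv (lams Ts b) = fv b"
  by (induction Ts) auto

lemma rename_lams: "rename \<rho> (lams Ts b) = lams Ts (rename ((lift^^length Ts) \<rho>) b)"
  by (induction Ts arbitrary: \<rho>) (auto simp: funpow_swap1)

lemma lift_pow: "(lift^^k) \<rho> i = (if i < k then i else \<rho> (i-k) + k)"
proof (induction k arbitrary: i)
  case 0 then show ?case by simp
next
  case (Suc k)
  have e: "(lift^^Suc k) \<rho> i = lift ((lift^^k) \<rho>) i" by simp
  show ?case unfolding e
    by (cases i) (auto simp: lift_def Suc)
qed

lemma lift_comp: "lift (\<lambda>a. \<rho>1 (\<rho>2 a)) = (\<lambda>a. lift \<rho>1 (lift \<rho>2 a))"
  by (auto simp: lift_def split: nat.splits)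

lemma rename_rename: "rename \<rho>1 (rename \<rho>2 t) = rename (\<rho>1 \<circ> \<rho>2) t"
proof (induction t arbitrary: \<rho>1 \<rho>2)
  case (Lam T t) then show ?case by (simp add: lift_comp)
next
  case (App h ts) then show ?case by (cases h) auto
next
  case (FApp F xs) then show ?case by simp
qed

fun lbnd :: "nat \<Rightarrow> tm \<Rightarrow> bool" where
  "lbnd k (Lam T t) = lbnd (Suc k) t"
| "lbnd k (App (Cn c) ts) = (\<forall>t\<in>set ts. lbnd k t)"
| "lbnd k (App (Bv i) ts) = (i < k \<and> (\<forall>t\<in>set ts. lbnd k t))"
| "lbnd k (FApp F xs) = (\<forall>x\<in>set xs. x < k)"

lemma lbnd_lams[simp]: "lbnd k (lams Ts b) = lbnd (k + length Ts) b"
  by (induction Ts arbitrary: k) auto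

lemma rename_cong: "lbnd k t \<Longrightarrow> (\<forall>i<k. \<rho>1 i = \<rho>2 i) \<Longrightarrow> rename \<rho>1 t = rename \<rho>2 t"
proof (induction k t arbitrary: \<rho>1 \<rho>2 rule: lbnd.induct)
  case (1 k T t)
  have "\<forall>i<Suc k. lift \<rho>1 i = lift \<rho>2 i" using 1 by (auto simp: lift_def split: nat.splits)
  then show ?case using 1 by simp
qed auto

lemma lbnd_rename: "lbnd m t \<Longrightarrow> (\<forall>i<m. \<rho> i < k) \<Longrightarrow> lbnd k (rename \<rho> t)"
proof (induction m t arbitrary: \<rho> k rule: lbnd.induct)
  case (1 m T t)
  have "\<forall>i<Suc m. lift \<rho> i < Suc k" using 1 by (auto simp: lift_def split: nat.splits)
  then show ?case using 1 by simp
qed auto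

lemma lbnd_mono: "lbnd m t \<Longrightarrow> m \<le> k \<Longrightarrow> lbnd k t"
  by (induction m t arbitrary: k rule: lbnd.induct) auto

lemma lbnd_unlam: "lbnd j u \<Longrightarrow> lbnd (j + n) (unlam n u)"
proof (induction n u arbitrary: j rule: unlam.induct)
  case (2 n T t) then show ?case by (metis add_Suc_shift lbnd.simps(1) unlam.simps(2))
qed (auto intro: lbnd_mono)

definition closed_sub :: "sub \<Rightarrow> bool" where
  "closed_sub \<theta> \<longleftrightarrow> (\<forall>F u. \<theta> F = Some u \<longrightarrow> lbnd 0 u)"

lemma app_rename: "closed_sub \<theta> \<Longrightarrow> app \<theta> (rename \<rho> t) = rename \<rho> (app \<theta> t)"
proof (induction t arbitrary: \<rho>)
  case (Lam T t) then show ?case by simp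
next
  case (App h ts) then show ?case by (cases h) auto
next
  case (FApp F xs)
  show ?case
  proof (cases "\<theta> F")
    case None then show ?thesis by simp
  next
    case (Some u)
    let ?n = "length xs"
    have "lbnd 0 u" using FApp.prems Some unfolding closed_sub_def by blast
    then have lb: "lbnd ?n (unlam ?n u)" using lbnd_unlam[of 0 u ?n] by simp
    have "app \<theta> (rename \<rho> (FApp F xs)) = rename (\<lambda>k. if k < ?n then map \<rho> xs ! (?n - 1 - k) else k - ?n) (unlam ?n u)"
      using Some by (simp add: inst_def Let_def)
    also have "\<dots> = rename (\<rho> \<circ> (\<lambda>k. if k < ?n then xs ! (?n - 1 - k) else k - ?n)) (unlam ?n u)"
      by (rule rename_cong[OF lb]) auto
    also have "\<dots> = rename \<rho> (app \<theta> (FApp F xs))"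
      using Some by (simp add: inst_def Let_def rename_rename)
    finally show ?thesis .
  qed
qed



fun wfa :: "tm \<Rightarrow> bool" where
  "wfa (Lam T t) = wfa t"
| "wfa (App h ts) = (\<forall>t\<in>set ts. wfa t)"
| "wfa (FApp F xs) = (length xs = length (arg_tys (snd F)))"

lemma wf_lams[simp]: "wfa (lams Ts b) = wfa b"
  by (induction Ts) auto

lemma wf_rename[simp]: "wfa (rename \<rho> t) = wfa t"
  by (induction \<rho> t rule: rename.induct) auto

definition good :: "sub \<Rightarrow> bool" where
  "good \<theta> \<longleftrightarrow> (\<forall>F u. \<theta> F = Some u \<longrightarrow> lbnd 0 u \<and> wfa u \<and> (\<exists>b. u = lams (arg_tys (snd F)) b))"

lemma good_closed: "good \<theta> \<Longrightarrow> closed_sub \<theta>"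
  by (auto simp: good_def closed_sub_def)

lemma good_empty[simp]: "good Map.empty"
  by (simp add: good_def)

definition rho :: "nat list \<Rightarrow> nat \<Rightarrow> nat" where
  "rho xs = (\<lambda>k. if k < length xs then xs ! (length xs - 1 - k) else k - length xs)"

lemma inst_lams: "length xs = length Ts \<Longrightarrow> inst (lams Ts b) xs = rename (rho xs) b"
proof -
  assume "length xs = length Ts"
  then have "unlam (length xs) (lams Ts b) = b" by simp
  then show ?thesis unfolding inst_def rho_def Let_def by (simp only:)
qed

lemma good_SomeE:
  assumes "good \<theta>" "\<theta> F = Some u"
  obtains b where "u = lams (arg_tys (snd F)) b" "lbnd (length (arg_tys (snd F))) b" "wfa b"
  using assms unfolding good_def by fastforce

lemma wf_app: "good \<theta> \<Longrightarrow> wfa t \<Longrightarrow> wfa (app \<theta> t)"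
proof (induction t)
  case (FApp F xs)
  show ?case
  proof (cases "\<theta> F")
    case (Some u)
    then obtain b where "u = lams (arg_tys (snd F)) b" "wfa b"
      using good_SomeE[OF FApp(1) Some] by metis
    then show ?thesis using Some FApp by (simp add: inst_lams)
  qed (use FApp in simp_all)
qed auto

lemma lbnd_app: "closed_sub \<theta> \<Longrightarrow> lbnd k t \<Longrightarrow> lbnd k (app \<theta> t)"
proof (induction k t rule: lbnd.induct)
  case (4 k F xs)
  show ?case
  proof (cases "\<theta> F")
    case (Some u)
    let ?n = "length xs"
    have "lbnd 0 u" using 4 Some unfolding closed_sub_def by blast
    then have lb: "lbnd ?n (unlam ?n u)" using lbnd_unlam[of 0 u ?n] by simp
    have "lbnd k (rename (rho xs) (unlam ?n u))"
      by (rule lbnd_rename[OF lb]) (use 4 in \<open>auto simp: rho_def\<close>)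
    then show ?thesis using Some by (simp add: inst_def rho_def Let_def)
  qed (use 4 in simp_all)
qed auto

lemma app_comp: "good \<sigma> \<Longrightarrow> closed_sub \<theta> \<Longrightarrow> wfa t \<Longrightarrow> app (comp \<sigma> \<theta>) t = app \<theta> (app \<sigma> t)"
proof (induction t)
  case (FApp F xs)
  show ?case
  proof (cases "\<sigma> F")
    case None then show ?thesis by (simp add: comp_def)
  next
    case (Some u)
    then obtain b where b: "u = lams (arg_tys (snd F)) b"
      using good_SomeE[OF FApp(1) Some] by metis
    have "app (comp \<sigma> \<theta>) (FApp F xs) = rename (rho xs) (app \<theta> b)"
      using Some b FApp by (simp add: comp_def inst_lams)
    also have "\<dots> = app \<theta> (app \<sigma> (FApp F xs))"
      using Some b FApp by (simp add: inst_lams app_rename)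
    finally show ?thesis .
  qed
qed auto

lemma good_comp: "good \<sigma> \<Longrightarrow> good \<theta> \<Longrightarrow> good (comp \<sigma> \<theta>)"
  unfolding good_def comp_def
  using lbnd_app[OF good_closed] wf_app
  by (fastforce simp: good_def split: option.splits)

lemma app_empty[simp]: "app Map.empty t = t"
  by (induction t) (auto simp: map_idI)

lemma app_cong: "(\<forall>X\<in>fv t. \<theta>1 X = \<theta>2 X) \<Longrightarrow> app \<theta>1 t = app \<theta>2 t"
  by (induction t) auto

lemma fv_rename[simp]: "fv (rename \<rho> t) = fv t"
  by (induction \<rho> t rule: rename.induct) auto

lemma fv_unlam[simp]: "fv (unlam n t) = fv t"
  by (induction n t rule: unlam.induct) auto

lemma fv_app: "fv (app \<theta> t) \<subseteq> fv t \<union> (\<Union>u\<in>ran \<theta>. fv u)"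
proof (induction t)
  case (FApp F xs)
  show ?case
  proof (cases "\<theta> F")
    case (Some u)
    then have "u \<in> ran \<theta>" by (metis ranI)
    then show ?thesis using Some by (auto simp: inst_def Let_def)
  qed simp
qed auto

lemma app_id: "(\<forall>X\<in>fv t. \<theta> X = None) \<Longrightarrow> app \<theta> t = t"
  using app_cong[of t \<theta> Map.empty] by simp



lemma simH_le1: "similarity R \<Longrightarrow> simH R f g \<le> 1"
  by (cases "(R,f,g)" rule: simH.cases) (auto simp: similarity_def)

lemma simH_sym: "similarity R \<Longrightarrow> simH R f g = simH R g f"
  by (cases "(R,f,g)" rule: simH.cases) (auto simp: similarity_def)

lemma simH_refl: "similarity R \<Longrightarrow> simH R f f = 1"
  by (cases f) (auto simp: similarity_def)

lemma simR_le1: "similarity R \<Longrightarrow> simR R a b \<le> 1"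
  and simRs_le1: "similarity R \<Longrightarrow> simRs R as bs \<le> 1"
  by (induction R a b and R as bs rule: simR_simRs.induct) (auto simp: simH_le1 min.coboundedI2)

lemma simR_sym: "similarity R \<Longrightarrow> simR R a b = simR R b a"
  and simRs_sym: "similarity R \<Longrightarrow> simRs R as bs = simRs R bs as"
  by (induction R a b and R as bs rule: simR_simRs.induct) (auto simp: simH_sym)

lemma simRs_refl_aux: "(\<forall>t\<in>set ts. simR R t t = 1) \<Longrightarrow> simRs R ts ts = 1"
  by (induction ts) auto

lemma simR_refl: "similarity R \<Longrightarrow> simR R a a = 1"
  by (induction a) (auto simp: simH_refl simRs_refl_aux)

lemma simRs_ge: "length ts = length ss \<Longrightarrow>
   (c \<le> simRs R ts ss) = (c \<le> 1 \<and> (\<forall>(a,b)\<in>set (zip ts ss). c \<le> simR R a b))"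
proof (induction ts arbitrary: ss)
  case Nil then show ?case by simp
next
  case (Cons t ts)
  then obtain s ss' where "ss = s # ss'" by (cases ss) auto
  with Cons show ?case by auto
qed



lemma idx_lt: "j \<in> set xs \<Longrightarrow> idx xs j < length xs"
  by (induction xs) auto

lemma idx_nth: "j \<in> set xs \<Longrightarrow> xs ! idx xs j = j"
  by (induction xs) auto

lemma rho_lt: "k < length xs \<Longrightarrow> rho xs k = xs ! (length xs - 1 - k)"
  by (simp add: rho_def)

lemma rho_idx: "z \<in> set xs \<Longrightarrow> rho xs (length xs - 1 - idx xs z) = z"
proof -
  assume z: "z \<in> set xs"
  have a: "idx xs z < length xs" using idx_lt[OF z] .
  then have "length xs - 1 - idx xs z < length xs" by linarith
  then have "rho xs (length xs - 1 - idx xs z) = xs ! (length xs - 1 - (length xs - 1 - idx xs z))"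
    by (rule rho_lt)
  also have "length xs - 1 - (length xs - 1 - idx xs z) = idx xs z" using a by linarith
  finally show ?thesis using idx_nth[OF z] by simp
qed

lemma rho_idx': "z \<in> set xs \<Longrightarrow> rho xs (length xs - Suc (idx xs z)) = z"
  using rho_idx by simp

fun rnh :: "(nat \<Rightarrow> nat) \<Rightarrow> hd \<Rightarrow> hd" where
  "rnh \<rho> (Cn c) = Cn c"
| "rnh \<rho> (Bv i) = Bv (\<rho> i)"

lemma rename_App: "rename \<rho> (App h ts) = App (rnh \<rho> h) (map (rename \<rho>) ts)"
  by (cases h) auto

lemma head_bind_rename: "rigid_ok xs a \<Longrightarrow> rnh (rho xs) (head_bind xs a) = a"
  by (cases a) (auto simp: rho_idx')

lemma lift_rev: "map ((lift^^k) (rho xs)) (rev [0..<length xs + k]) = map (\<lambda>j. j + k) xs @ rev [0..<k]"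
proof (rule nth_equalityI)
  fix i assume i: "i < length (map ((lift^^k) (rho xs)) (rev [0..<length xs + k]))"
  then have i': "i < length xs + k" by simp
  show "map ((lift^^k) (rho xs)) (rev [0..<length xs + k]) ! i = (map (\<lambda>j. j + k) xs @ rev [0..<k]) ! i"
  proof (cases "i < length xs")
    case True
    then show ?thesis using i' by (auto simp: rev_nth lift_pow rho_def nth_append)
  next
    case False
    then show ?thesis using i' by (auto simp: rev_nth lift_pow rho_def nth_append)
  qed
qed simp

definition SI :: "eqn set \<Rightarrow> bool" where
  "SI P \<longleftrightarrow> (\<forall>l r. (l,r) \<in> P \<longrightarrow> (\<exists>X ys. l = FApp X ys \<and> X \<notin> fv r \<and>
      (\<forall>l' r'. (l',r') \<in> P \<longrightarrow> (l',r') \<noteq> (l,r) \<longrightarrow> X \<notin> fv l' \<and> X \<notin> fv r')))"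

definition WP :: "eqn set \<Rightarrow> bool" where
  "WP P \<longleftrightarrow> (\<forall>l r. (l,r) \<in> P \<longrightarrow> wfa l \<and> wfa r)"

definition unif :: "sub \<Rightarrow> eqn set \<Rightarrow> bool" where
  "unif \<tau> P \<longleftrightarrow> (\<forall>l r. (l,r) \<in> P \<longrightarrow> app \<tau> l = app \<tau> r)"

definition JI :: "tm \<Rightarrow> tm \<Rightarrow> eqn set \<Rightarrow> sub \<Rightarrow> bool" where
  "JI l0 r0 P \<sigma> \<longleftrightarrow> (\<forall>\<tau>. good \<tau> \<longrightarrow> unif \<tau> P \<longrightarrow> app \<tau> (app \<sigma> l0) = app \<tau> (app \<sigma> r0))"

lemma J_step:
  assumes "good \<sigma>" "good \<theta>" "wfa l0" "wfa r0" "JI l0 r0 P \<sigma>"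
    and "\<And>\<tau>'. good \<tau>' \<Longrightarrow> unif \<tau>' P' \<Longrightarrow> unif (comp \<theta> \<tau>') P"
  shows "JI l0 r0 P' (comp \<sigma> \<theta>)"
  unfolding JI_def
proof (intro allI impI)
  fix \<tau>' assume g: "good \<tau>'" and u: "unif \<tau>' P'"
  have "app (comp \<theta> \<tau>') (app \<sigma> l0) = app (comp \<theta> \<tau>') (app \<sigma> r0)"
    using assms(5) good_comp[OF assms(2) g] assms(6)[OF g u] unfolding JI_def by blast
  moreover have "app (comp \<theta> \<tau>') (app \<sigma> x) = app \<tau>' (app (comp \<sigma> \<theta>) x)" if "wfa x" for x
    using app_comp[OF assms(2) good_closed[OF g] wf_app[OF assms(1) that]]
      app_comp[OF assms(1) good_closed[OF assms(2)] that] by simp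
  ultimately show "app \<tau>' (app (comp \<sigma> \<theta>) l0) = app \<tau>' (app (comp \<sigma> \<theta>) r0)"
    using assms(3,4) by simp
qed

lemma fv_eqsI: "(l, r) \<in> P \<Longrightarrow> X \<notin> fv_eqs P \<Longrightarrow> X \<notin> fv l \<and> X \<notin> fv r"
  unfolding fv_eqs_def by blast



lemma ve_inv:
  assumes "ve_step A c c'" "wfa l0" "wfa r0" "good (snd c)" "WP (fst c)" "SI (fst c)" "JI l0 r0 (fst c) (snd c)"
  shows "good (snd c') \<and> WP (fst c') \<and> SI (fst c') \<and> JI l0 r0 (fst c') (snd c')"
  using assms
proof (induction rule: ve_step.induct)
  case (VE1 F xs a ss P Tx n Ta Hs \<sigma> bs \<theta> Q)
  have gs: "good \<sigma>" and WPP: "WP P" and SIP: "SI P" and JIP: "JI l0 r0 P \<sigma>"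
    using VE1(17-20) by simp_all
  note wl = VE1(15,16)
  let ?e = "(FApp F xs, App a ss)"
  let ?m = "length ss"
  define K where "K i = length (arg_tys (Ta ! i))" for i
  define args where "args = map (\<lambda>i. lams (arg_tys (Ta ! i)) (FApp (Hs ! i) (rev [0..<n + K i]))) [0..<?m]"
  define U where "U = lams Tx (App (head_bind xs a) args)"
  have th: "\<theta> = [F \<mapsto> U]" using VE1 by (simp add: U_def args_def K_def Let_def)
  have Qd: "Q = (\<lambda>i. (FApp (Hs ! i) (map (\<lambda>j. j + K i) xs @ rev [0..<K i]), bs ! i)) ` {..<?m}"
    using VE1 by (simp add: K_def Let_def)
  have wfe: "wfa (FApp F xs)" "wfa (App a ss)" using VE1(1) WPP unfolding WP_def by blast+
  then have lenTx: "length Tx = n" using VE1 by simp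
  have wfss: "\<forall>s\<in>set ss. wfa s" using wfe by simp
  obtain X ys where "FApp F xs = FApp X ys" and Fr: "X \<notin> fv (App a ss)"
    and Fo: "\<forall>l' r'. (l',r') \<in> P \<longrightarrow> (l',r') \<noteq> ?e \<longrightarrow> X \<notin> fv l' \<and> X \<notin> fv r'"
    using VE1(1) SIP unfolding SI_def by blast
  then have XF: "X = F" by simp
  have Hfresh: "\<forall>i<?m. Hs ! i \<notin> fv_eqs P" using VE1(9) VE1(7) by (auto simp: nth_mem)
  have fvb: "fv (bs ! i) \<subseteq> fv (App a ss)" if "i < ?m" for i
  proof -
    have "fv (ss ! i) = fv (bs ! i)" using VE1(12) that by simp
    moreover have "ss ! i \<in> set ss" using that by simp
    ultimately show ?thesis by auto
  qed
  have Hnb: "Hs ! i \<notin> fv (bs ! j)" if "i < ?m" "j < ?m" for i j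
    using fvb[OF that(2)] Hfresh that fv_eqsI[OF VE1(1)] by blast
  have lbU: "lbnd 0 U"
  proof -
    have "\<forall>t\<in>set args. lbnd n t" unfolding args_def K_def by auto
    moreover have "n > 0" if "a = Bv j" for j using VE1(2,4) that by (auto simp: length_pos_if_in_set)
    ultimately show ?thesis unfolding U_def using lenTx VE1(2,4) idx_lt
      by (cases a) (auto simp: nth_mem)
  qed
  have wfU: "wfa U"
    unfolding U_def args_def K_def using VE1(10) lenTx by auto
  have gth: "good \<theta>" unfolding th good_def using lbU wfU VE1(3) U_def by auto
  have WP': "WP (Q \<union> (P - {?e}))"
    unfolding WP_def
  proof (intro allI impI)
    fix l r assume "(l, r) \<in> Q \<union> (P - {?e})"
    then show "wfa l \<and> wfa r"
    proof
      assume "(l, r) \<in> Q"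
      then obtain i where i: "i < ?m" "l = FApp (Hs ! i) (map (\<lambda>j. j + K i) xs @ rev [0..<K i])" "r = bs ! i"
        using Qd by auto
      have "wfa (ss ! i)" using wfss i by simp
      then have "wfa r" using VE1(12) i by simp
      then show ?thesis using i VE1(10) lenTx VE1(4) by (simp add: K_def)
    next
      assume "(l, r) \<in> P - {?e}" then show ?thesis using WPP unfolding WP_def by auto
    qed
  qed
  have SI': "SI (Q \<union> (P - {?e}))"
    unfolding SI_def
  proof (intro allI impI)
    fix l r assume lr: "(l, r) \<in> Q \<union> (P - {?e})"
    show "\<exists>X ys. l = FApp X ys \<and> X \<notin> fv r \<and>
      (\<forall>l' r'. (l',r') \<in> Q \<union> (P - {?e}) \<longrightarrow> (l',r') \<noteq> (l,r) \<longrightarrow> X \<notin> fv l' \<and> X \<notin> fv r')"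
      using lr
    proof
      assume "(l, r) \<in> Q"
      then obtain i where i: "i < ?m" "l = FApp (Hs ! i) (map (\<lambda>j. j + K i) xs @ rev [0..<K i])" "r = bs ! i"
        using Qd by auto
      have "\<forall>l' r'. (l',r') \<in> Q \<union> (P - {?e}) \<longrightarrow> (l',r') \<noteq> (l,r) \<longrightarrow> Hs ! i \<notin> fv l' \<and> Hs ! i \<notin> fv r'"
      proof (intro allI impI)
        fix l' r' assume lr': "(l',r') \<in> Q \<union> (P - {?e})" and ne: "(l',r') \<noteq> (l,r)"
        show "Hs ! i \<notin> fv l' \<and> Hs ! i \<notin> fv r'"
          using lr'
        proof
          assume "(l',r') \<in> Q"
          then obtain j where j: "j < ?m" "l' = FApp (Hs ! j) (map (\<lambda>j'. j' + K j) xs @ rev [0..<K j])" "r' = bs ! j"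
            using Qd by auto
          have "j \<noteq> i" using ne i j by auto
          then have "Hs ! i \<noteq> Hs ! j" using VE1(7,8) i j by (simp add: nth_eq_iff_index_eq)
          then show ?thesis using j Hnb[OF i(1) j(1)] by simp
        next
          assume "(l',r') \<in> P - {?e}"
          then show ?thesis using Hfresh i fv_eqsI by blast
        qed
      qed
      then show ?thesis using i Hnb[OF i(1) i(1)] by blast
    next
      assume lrP: "(l, r) \<in> P - {?e}"
      then obtain Y zs where Y: "l = FApp Y zs" "Y \<notin> fv r"
        and Yo: "\<forall>l' r'. (l',r') \<in> P \<longrightarrow> (l',r') \<noteq> (l,r) \<longrightarrow> Y \<notin> fv l' \<and> Y \<notin> fv r'"
        using SIP unfolding SI_def by blast
      have Ye: "Y \<notin> fv (App a ss)" using Yo lrP VE1(1) by blast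
      have "Y \<in> fv_eqs P" using lrP Y unfolding fv_eqs_def by force
      then have "\<forall>j<?m. Y \<noteq> Hs ! j" using Hfresh by auto
      then have "\<forall>l' r'. (l',r') \<in> Q \<longrightarrow> Y \<notin> fv l' \<and> Y \<notin> fv r'"
        using Qd Ye fvb by fastforce
      then show ?thesis using Y Yo by blast
    qed
  qed
  have JI': "JI l0 r0 (Q \<union> (P - {?e})) (comp \<sigma> \<theta>)"
  proof (rule J_step[OF gs gth wl JIP])
    fix \<tau>' assume g: "good \<tau>'" and u: "unif \<tau>' (Q \<union> (P - {?e}))"
    have cl: "closed_sub \<tau>'" using g by (rule good_closed)
    have comp_eq: "app (comp \<theta> \<tau>') t = app \<tau>' (app \<theta> t)" if "wfa t" for t
      using app_comp[OF gth cl that] .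
    have idt: "app \<theta> t = t" if "F \<notin> fv t" for t
    proof -
      have "\<forall>X\<in>fv t. \<theta> X = None" using that th by auto
      then show ?thesis by (rule app_id)
    qed
    have uQ: "app \<tau>' (FApp (Hs ! i) (map (\<lambda>j. j + K i) xs @ rev [0..<K i])) = app \<tau>' (bs ! i)"
      if "i < ?m" for i
      using u that Qd unfolding unif_def by blast
    show "unif (comp \<theta> \<tau>') P"
      unfolding unif_def
    proof (intro allI impI)
      fix l r assume lr: "(l, r) \<in> P"
      have wlr: "wfa l" "wfa r" using lr WPP unfolding WP_def by auto
      show "app (comp \<theta> \<tau>') l = app (comp \<theta> \<tau>') r"
      proof (cases "(l, r) = ?e")
        case False
        then have "F \<notin> fv l" "F \<notin> fv r" using Fo XF lr by auto
        then show ?thesis using comp_eq wlr idt u lr False unfolding unif_def by auto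
      next
        case True
        then have lr': "l = FApp F xs" "r = App a ss" by auto
        have "app (comp \<theta> \<tau>') r = App a (map (app \<tau>') ss)"
          using comp_eq[OF wlr(2)] idt Fr XF lr' by simp
        moreover have "app (comp \<theta> \<tau>') l = App a (map (app \<tau>') ss)"
        proof -
          have "app (comp \<theta> \<tau>') l = app \<tau>' (inst U xs)"
            using comp_eq[OF wlr(1)] lr' th by simp
          also have "\<dots> = app \<tau>' (rename (rho xs) (App (head_bind xs a) args))"
            unfolding U_def using lenTx VE1(4) by (simp add: inst_lams)
          also have "\<dots> = rename (rho xs) (App (head_bind xs a) (map (app \<tau>') args))"
            using app_rename[OF cl] by simp
          also have "\<dots> = App a (map (rename (rho xs)) (map (app \<tau>') args))"
            using head_bind_rename[OF VE1(2)] by (simp add: rename_App)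
          also have "map (rename (rho xs)) (map (app \<tau>') args) = map (app \<tau>') ss"
          proof (rule nth_equalityI)
            show "length (map (rename (rho xs)) (map (app \<tau>') args)) = length (map (app \<tau>') ss)"
              by (simp add: args_def)
          next
            fix i assume "i < length (map (rename (rho xs)) (map (app \<tau>') args))"
            then have i: "i < ?m" by (simp add: args_def)
            have "map (rename (rho xs)) (map (app \<tau>') args) ! i
                = rename (rho xs) (app \<tau>' (lams (arg_tys (Ta ! i)) (FApp (Hs ! i) (rev [0..<n + K i]))))"
              using i by (simp add: args_def)
            also have "\<dots> = lams (arg_tys (Ta ! i)) (app \<tau>' (rename ((lift ^^ K i) (rho xs)) (FApp (Hs ! i) (rev [0..<n + K i]))))"
              by (simp only: app_lams rename_lams app_rename[OF cl] K_def)
            also have "rename ((lift ^^ K i) (rho xs)) (FApp (Hs ! i) (rev [0..<n + K i]))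
                 = FApp (Hs ! i) (map (\<lambda>j. j + K i) xs @ rev [0..<K i])"
              using lift_rev[of "K i" xs] VE1(4) by simp
            also have "app \<tau>' (FApp (Hs ! i) (map (\<lambda>j. j + K i) xs @ rev [0..<K i])) = app \<tau>' (bs ! i)"
              using uQ[OF i] .
            also have "lams (arg_tys (Ta ! i)) (app \<tau>' (bs ! i)) = app \<tau>' (ss ! i)"
              using VE1(12) i by simp
            finally show "map (rename (rho xs)) (map (app \<tau>') args) ! i = map (app \<tau>') ss ! i"
              using i by simp
          qed
          finally show ?thesis .
        qed
        ultimately show ?thesis by simp
      qed
    qed
  qed
  show ?case using good_comp[OF gs gth] WP' SI' JI' by simp
next
  case (VE2 F xs G ys P Tx Ty zs H \<sigma> \<theta>)
  have gs: "good \<sigma>" and WPP: "WP P" and SIP: "SI P" and JIP: "JI l0 r0 P \<sigma>"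
    using VE2(10-13) by simp_all
  note wl = VE2(8,9)
  let ?e = "(FApp F xs, FApp G ys)"
  define UF where "UF = lams Tx (FApp H (map (\<lambda>z. length xs - 1 - idx xs z) zs))"
  define UG where "UG = lams Ty (FApp H (map (\<lambda>z. length ys - 1 - idx ys z) zs))"
  have th: "\<theta> = [F \<mapsto> UF, G \<mapsto> UG]" using VE2(7) by (simp add: UF_def UG_def)
  have wfe: "wfa (FApp F xs)" "wfa (FApp G ys)" using VE2(1) WPP unfolding WP_def by blast+
  then have lenTx: "length Tx = length xs" and lenTy: "length Ty = length ys" using VE2(2,3) by simp_all
  obtain X ws where "FApp F xs = FApp X ws" and Fr: "X \<notin> fv (FApp G ys)"
    and Fo: "\<forall>l' r'. (l',r') \<in> P \<longrightarrow> (l',r') \<noteq> ?e \<longrightarrow> X \<notin> fv l' \<and> X \<notin> fv r'"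
    using VE2(1) SIP unfolding SI_def by blast
  then have XF: "X = F" by simp
  have FG: "F \<noteq> G" using Fr XF by simp
  have thF: "\<theta> F = Some UF" and thG: "\<theta> G = Some UG" and thO: "\<And>Y. Y \<noteq> F \<Longrightarrow> Y \<noteq> G \<Longrightarrow> \<theta> Y = None"
    using th FG by auto
  have zsx: "z \<in> set xs" and zsy: "z \<in> set ys" if "z \<in> set zs" for z
    using that VE2(4) by auto
  have lbF: "lbnd 0 UF"
  proof -
    have "length xs - 1 - idx xs z < length xs" if "z \<in> set zs" for z
      using idx_lt[OF zsx[OF that]] by linarith
    then show ?thesis unfolding UF_def using lenTx by auto
  qed
  have lbG: "lbnd 0 UG"
  proof -
    have "length ys - 1 - idx ys z < length ys" if "z \<in> set zs" for z
      using idx_lt[OF zsy[OF that]] by linarith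
    then show ?thesis unfolding UG_def using lenTy by auto
  qed
  have wfF: "wfa UF" and wfG: "wfa UG" unfolding UF_def UG_def using VE2(6) by auto
  have gth: "good \<theta>" unfolding good_def
  proof (intro allI impI)
    fix Y u assume "\<theta> Y = Some u"
    then have "(Y = F \<and> u = UF) \<or> (Y = G \<and> u = UG)" using thF thG thO by (metis option.inject option.distinct(1))
    then show "lbnd 0 u \<and> wfa u \<and> (\<exists>b. u = lams (arg_tys (snd Y)) b)"
      using lbF lbG wfF wfG VE2(2,3) UF_def UG_def by auto
  qed
  have ranH: "fv u \<subseteq> {H}" if "u \<in> ran \<theta>" for u
  proof -
    from that obtain Y where "\<theta> Y = Some u" by (auto simp: ran_def)
    then have "u = UF \<or> u = UG" using thF thG thO by (metis option.inject option.distinct(1))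
    then show ?thesis unfolding UF_def UG_def by auto
  qed
  have fvth: "fv (app \<theta> t) \<subseteq> fv t \<union> {H}" for t
    using fv_app[of \<theta> t] ranH by blast
  have Hn: "H \<notin> fv l \<and> H \<notin> fv r" if "(l, r) \<in> P" for l r
    using fv_eqsI[OF that] VE2(5) by blast
  let ?P' = "app_eqs \<theta> (P - {?e})"
  have memP': "(l', r') \<in> ?P' \<longleftrightarrow> (\<exists>l r. (l, r) \<in> P - {?e} \<and> l' = app \<theta> l \<and> r' = app \<theta> r)" for l' r'
    unfolding app_eqs_def by auto
  have WP': "WP ?P'"
    unfolding WP_def memP' using WPP gth wf_app unfolding WP_def by blast
  have SI': "SI ?P'"
    unfolding SI_def
  proof (intro allI impI)
    fix l' r' assume "(l', r') \<in> ?P'"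
    then obtain l r where lr: "(l, r) \<in> P - {?e}" "l' = app \<theta> l" "r' = app \<theta> r"
      using memP' by blast
    then obtain Y ws where Y: "l = FApp Y ws" "Y \<notin> fv r"
      and Yo: "\<forall>l2 r2. (l2,r2) \<in> P \<longrightarrow> (l2,r2) \<noteq> (l,r) \<longrightarrow> Y \<notin> fv l2 \<and> Y \<notin> fv r2"
      using SIP unfolding SI_def by blast
    have "Y \<notin> fv (FApp F xs)" "Y \<notin> fv (FApp G ys)" using Yo lr VE2(1) by blast+
    then have YFG: "Y \<noteq> F" "Y \<noteq> G" by auto
    have YH: "Y \<noteq> H" using Hn[of l r] lr(1) Y(1) by auto
    have l'eq: "l' = l" using lr Y thO[OF YFG] by simp
    have Yr': "Y \<notin> fv r'" using fvth[of r] lr Y YH by blast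
    have "\<forall>l2 r2. (l2,r2) \<in> ?P' \<longrightarrow> (l2,r2) \<noteq> (l',r') \<longrightarrow> Y \<notin> fv l2 \<and> Y \<notin> fv r2"
    proof (intro allI impI)
      fix l2 r2 assume "(l2,r2) \<in> ?P'" and ne: "(l2,r2) \<noteq> (l',r')"
      then obtain l3 r3 where lr3: "(l3, r3) \<in> P - {?e}" "l2 = app \<theta> l3" "r2 = app \<theta> r3"
        using memP' by blast
      have "(l3, r3) \<noteq> (l, r)" using ne lr lr3 by auto
      then have "Y \<notin> fv l3" "Y \<notin> fv r3" using Yo lr3 by auto
      then show "Y \<notin> fv l2 \<and> Y \<notin> fv r2" using fvth[of l3] fvth[of r3] lr3 YH by blast
    qed
    then show "\<exists>X ys. l' = FApp X ys \<and> X \<notin> fv r' \<and>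
      (\<forall>l2 r2. (l2,r2) \<in> ?P' \<longrightarrow> (l2,r2) \<noteq> (l',r') \<longrightarrow> X \<notin> fv l2 \<and> X \<notin> fv r2)"
      using l'eq Y Yr' by blast
  qed
  have JI': "JI l0 r0 ?P' (comp \<sigma> \<theta>)"
  proof (rule J_step[OF gs gth wl JIP])
    fix \<tau>' assume g: "good \<tau>'" and u: "unif \<tau>' ?P'"
    have cl: "closed_sub \<tau>'" using g by (rule good_closed)
    have comp_eq: "app (comp \<theta> \<tau>') t = app \<tau>' (app \<theta> t)" if "wfa t" for t
      using app_comp[OF gth cl that] .
    have sideF: "app (comp \<theta> \<tau>') (FApp F xs) = app \<tau>' (FApp H zs)"
    proof -
      have "app (comp \<theta> \<tau>') (FApp F xs) = app \<tau>' (rename (rho xs) (FApp H (map (\<lambda>z. length xs - 1 - idx xs z) zs)))"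
        using comp_eq[OF wfe(1)] thF lenTx by (simp add: UF_def inst_lams)
      also have "rename (rho xs) (FApp H (map (\<lambda>z. length xs - 1 - idx xs z) zs)) = FApp H zs"
        using rho_idx zsx by (simp add: map_idI)
      finally show ?thesis .
    qed
    have sideG: "app (comp \<theta> \<tau>') (FApp G ys) = app \<tau>' (FApp H zs)"
    proof -
      have "app (comp \<theta> \<tau>') (FApp G ys) = app \<tau>' (rename (rho ys) (FApp H (map (\<lambda>z. length ys - 1 - idx ys z) zs)))"
        using comp_eq[OF wfe(2)] thG lenTy by (simp add: UG_def inst_lams)
      also have "rename (rho ys) (FApp H (map (\<lambda>z. length ys - 1 - idx ys z) zs)) = FApp H zs"
        using rho_idx zsy by (simp add: map_idI)
      finally show ?thesis .
    qed
    show "unif (comp \<theta> \<tau>') P"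
      unfolding unif_def
    proof (intro allI impI)
      fix l r assume lr: "(l, r) \<in> P"
      have wlr: "wfa l" "wfa r" using lr WPP unfolding WP_def by auto
      show "app (comp \<theta> \<tau>') l = app (comp \<theta> \<tau>') r"
      proof (cases "(l, r) = ?e")
        case True
        then show ?thesis using sideF sideG by auto
      next
        case False
        then have "(app \<theta> l, app \<theta> r) \<in> ?P'" using lr memP' by blast
        then show ?thesis using u comp_eq wlr unfolding unif_def by auto
      qed
    qed
  qed
  show ?case using good_comp[OF gs gth] WP' SI' JI' by simp
qed



lemma var_elim_sound:
  assumes "var_elim A (FApp F xs) r \<phi>" "F \<notin> fv r" "wfa (FApp F xs)" "wfa r"
  shows "good \<phi> \<and> app \<phi> (FApp F xs) = app \<phi> r"
proof -
  let ?l0 = "FApp F xs"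
  let ?I = "\<lambda>c. good (snd c) \<and> WP (fst c) \<and> SI (fst c) \<and> JI ?l0 r (fst c) (snd c)"
  have "(ve_step A)\<^sup>*\<^sup>* ({(?l0, r)}, Map.empty) ({}, \<phi>)"
    using assms(1) unfolding var_elim_def .
  moreover have "?I ({(?l0, r)}, Map.empty)"
    using assms(2-4) by (auto simp: WP_def SI_def JI_def unif_def)
  ultimately have "?I ({}, \<phi>)"
  proof (induction rule: rtranclp_induct)
    case base then show ?case by simp
  next
    case (step y z)
    then show ?case using ve_inv[OF step(2) assms(3,4)] by blast
  qed
  then show ?thesis unfolding JI_def unif_def using good_empty by fastforce
qed

definition HI :: "(const \<Rightarrow> const \<Rightarrow> real) \<Rightarrow> real \<Rightarrow> tm \<Rightarrow> tm \<Rightarrow> config \<Rightarrow> bool" where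
  "HI R \<mu> t s c \<longleftrightarrow> (case c of (P, \<sigma>, d) \<Rightarrow>
     good \<sigma> \<and> WP P \<and> \<mu> \<le> d \<and> d \<le> 1 \<and>
     (\<forall>\<tau>. good \<tau> \<longrightarrow> (\<forall>c. c \<le> simR R (app \<tau> (app \<sigma> t)) (app \<tau> (app \<sigma> s)) \<longleftrightarrow>
        c \<le> d \<and> (\<forall>l r. (l, r) \<in> P \<longrightarrow> c \<le> simR R (app \<tau> l) (app \<tau> r)))))"

lemma HI_subst:
  assumes sim: "similarity R" and wts: "wfa t" "wfa s" and hi: "HI R \<mu> t s (P, \<sigma>, d)"
    and e0: "(l0, r0) \<in> P" and gth: "good \<theta>" and eq: "app \<theta> l0 = app \<theta> r0"
  shows "HI R \<mu> t s (app_eqs \<theta> (P - {(l0, r0)}), comp \<sigma> \<theta>, d)"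
proof -
  have gs: "good \<sigma>" and WPP: "WP P" and d: "\<mu> \<le> d" "d \<le> 1"
    and main: "\<And>\<tau> c. good \<tau> \<Longrightarrow> c \<le> simR R (app \<tau> (app \<sigma> t)) (app \<tau> (app \<sigma> s)) \<longleftrightarrow>
        c \<le> d \<and> (\<forall>l r. (l, r) \<in> P \<longrightarrow> c \<le> simR R (app \<tau> l) (app \<tau> r))"
    using hi unfolding HI_def by auto
  let ?P' = "app_eqs \<theta> (P - {(l0, r0)})"
  have memP': "(l', r') \<in> ?P' \<longleftrightarrow> (\<exists>l r. (l, r) \<in> P - {(l0, r0)} \<and> l' = app \<theta> l \<and> r' = app \<theta> r)" for l' r'
    unfolding app_eqs_def by auto
  have WP': "WP ?P'"
    unfolding WP_def memP' using WPP gth wf_app unfolding WP_def by blast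
  have "\<forall>\<tau>'. good \<tau>' \<longrightarrow> (\<forall>c. c \<le> simR R (app \<tau>' (app (comp \<sigma> \<theta>) t)) (app \<tau>' (app (comp \<sigma> \<theta>) s)) \<longleftrightarrow>
        c \<le> d \<and> (\<forall>l r. (l, r) \<in> ?P' \<longrightarrow> c \<le> simR R (app \<tau>' l) (app \<tau>' r)))"
  proof (intro allI impI)
    fix \<tau>' c assume g: "good \<tau>'"
    have cl: "closed_sub \<tau>'" using g by (rule good_closed)
    have comp_eq: "app (comp \<theta> \<tau>') x = app \<tau>' (app \<theta> x)" if "wfa x" for x
      using app_comp[OF gth cl that] .
    have ts: "app (comp \<theta> \<tau>') (app \<sigma> x) = app \<tau>' (app (comp \<sigma> \<theta>) x)" if "wfa x" for x
      using comp_eq[OF wf_app[OF gs that]] app_comp[OF gs good_closed[OF gth] that] by simp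
    have M: "c \<le> simR R (app \<tau>' (app (comp \<sigma> \<theta>) t)) (app \<tau>' (app (comp \<sigma> \<theta>) s)) \<longleftrightarrow>
        c \<le> d \<and> (\<forall>l r. (l, r) \<in> P \<longrightarrow> c \<le> simR R (app \<tau>' (app \<theta> l)) (app \<tau>' (app \<theta> r)))"
    proof -
      have "(\<forall>l r. (l, r) \<in> P \<longrightarrow> c \<le> simR R (app (comp \<theta> \<tau>') l) (app (comp \<theta> \<tau>') r)) \<longleftrightarrow>
            (\<forall>l r. (l, r) \<in> P \<longrightarrow> c \<le> simR R (app \<tau>' (app \<theta> l)) (app \<tau>' (app \<theta> r)))"
        using WPP comp_eq unfolding WP_def by auto
      then show ?thesis
        using main[OF good_comp[OF gth g], of c] ts wts by simp
    qed
    have e0sim: "simR R (app \<tau>' (app \<theta> l0)) (app \<tau>' (app \<theta> r0)) = 1"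
      using eq simR_refl[OF sim] by simp
    show "c \<le> simR R (app \<tau>' (app (comp \<sigma> \<theta>) t)) (app \<tau>' (app (comp \<sigma> \<theta>) s)) \<longleftrightarrow>
        c \<le> d \<and> (\<forall>l r. (l, r) \<in> ?P' \<longrightarrow> c \<le> simR R (app \<tau>' l) (app \<tau>' r))"
    proof -
      let ?X = "\<lambda>l r. c \<le> simR R (app \<tau>' (app \<theta> l)) (app \<tau>' (app \<theta> r))"
      have A: "(\<forall>l r. (l, r) \<in> P \<longrightarrow> ?X l r) \<longleftrightarrow> ?X l0 r0 \<and> (\<forall>l r. (l, r) \<in> P - {(l0, r0)} \<longrightarrow> ?X l r)"
        using e0 by blast
      have B: "(\<forall>l r. (l, r) \<in> ?P' \<longrightarrow> c \<le> simR R (app \<tau>' l) (app \<tau>' r)) \<longleftrightarrow>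
               (\<forall>l r. (l, r) \<in> P - {(l0, r0)} \<longrightarrow> ?X l r)"
        unfolding memP' by blast
      have C: "c \<le> d \<Longrightarrow> ?X l0 r0" using e0sim d by simp
      show ?thesis unfolding M B using A C by blast
    qed
  qed
  then show ?thesis unfolding HI_def using good_comp[OF gs gth] WP' d by simp
qed



lemma HI_replace:
  assumes hi: "HI R \<mu> t s (P, \<sigma>, d)" and e0: "(l0, r0) \<in> P" and wE: "WP E"
    and d': "\<mu> \<le> d'" "d' \<le> 1"
    and eqv: "\<And>\<tau> c. good \<tau> \<Longrightarrow> (c \<le> d \<and> c \<le> simR R (app \<tau> l0) (app \<tau> r0)) \<longleftrightarrow>
         (c \<le> d' \<and> (\<forall>l r. (l, r) \<in> E \<longrightarrow> c \<le> simR R (app \<tau> l) (app \<tau> r)))"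
  shows "HI R \<mu> t s (E \<union> (P - {(l0, r0)}), \<sigma>, d')"
proof -
  have gs: "good \<sigma>" and WPP: "WP P"
    and main: "\<And>\<tau> c. good \<tau> \<Longrightarrow> c \<le> simR R (app \<tau> (app \<sigma> t)) (app \<tau> (app \<sigma> s)) \<longleftrightarrow>
        c \<le> d \<and> (\<forall>l r. (l, r) \<in> P \<longrightarrow> c \<le> simR R (app \<tau> l) (app \<tau> r))"
    using hi unfolding HI_def by auto
  have WP': "WP (E \<union> (P - {(l0, r0)}))" using wE WPP unfolding WP_def by blast
  have "\<forall>\<tau>. good \<tau> \<longrightarrow> (\<forall>c. c \<le> simR R (app \<tau> (app \<sigma> t)) (app \<tau> (app \<sigma> s)) \<longleftrightarrow>
        c \<le> d' \<and> (\<forall>l r. (l, r) \<in> E \<union> (P - {(l0, r0)}) \<longrightarrow> c \<le> simR R (app \<tau> l) (app \<tau> r)))"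
  proof (intro allI impI)
    fix \<tau> c assume g: "good \<tau>"
    let ?X = "\<lambda>l r. c \<le> simR R (app \<tau> l) (app \<tau> r)"
    have A: "(\<forall>l r. (l, r) \<in> P \<longrightarrow> ?X l r) \<longleftrightarrow> ?X l0 r0 \<and> (\<forall>l r. (l, r) \<in> P - {(l0, r0)} \<longrightarrow> ?X l r)"
      using e0 by blast
    have B: "(\<forall>l r. (l, r) \<in> E \<union> (P - {(l0, r0)}) \<longrightarrow> ?X l r) \<longleftrightarrow>
       (\<forall>l r. (l, r) \<in> E \<longrightarrow> ?X l r) \<and> (\<forall>l r. (l, r) \<in> P - {(l0, r0)} \<longrightarrow> ?X l r)"
      by blast
    show "c \<le> simR R (app \<tau> (app \<sigma> t)) (app \<tau> (app \<sigma> s)) \<longleftrightarrow>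
        c \<le> d' \<and> (\<forall>l r. (l, r) \<in> E \<union> (P - {(l0, r0)}) \<longrightarrow> ?X l r)"
      unfolding main[OF g] A B using eqv[OF g, of c] by blast
  qed
  then show ?thesis unfolding HI_def using gs WP' d' by simp
qed

lemma hopsu_inv:
  assumes "hopsu_step R \<mu> c c'" "similarity R" "wfa t0" "wfa s0" "HI R \<mu> t0 s0 c"
  shows "HI R \<mu> t0 s0 c'"
  using assms
proof (induction rule: hopsu_step.induct)
  case (Abs T t s P \<sigma> d)
  have hi: "HI R \<mu> t0 s0 (P, \<sigma>, d)" using Abs(5) .
  then have WPP: "WP P" and d: "\<mu> \<le> d" "d \<le> 1" unfolding HI_def by auto
  have "wfa (Lam T t) \<and> wfa (Lam T s)" using WPP Abs(1) unfolding WP_def by blast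
  then have "WP {(t, s)}" by (simp add: WP_def)
  moreover have "(c \<le> d \<and> c \<le> simR R (app \<tau> (Lam T t)) (app \<tau> (Lam T s))) \<longleftrightarrow>
         (c \<le> d \<and> (\<forall>l r. (l, r) \<in> {(t, s)} \<longrightarrow> c \<le> simR R (app \<tau> l) (app \<tau> r)))"
    for \<tau> c by simp
  ultimately have "HI R \<mu> t0 s0 ({(t, s)} \<union> (P - {(Lam T t, Lam T s)}), \<sigma>, d)"
    using HI_replace[OF hi Abs(1) _ d] by blast
  then show ?case by simp
next
  case (Dec f ts g ss P d \<sigma>)
  have hi: "HI R \<mu> t0 s0 (P, \<sigma>, d)" using Dec(7) .
  then have WPP: "WP P" and d: "\<mu> \<le> d" "d \<le> 1" unfolding HI_def by auto
  have "wfa (App f ts)" "wfa (App g ss)" using WPP Dec(1) unfolding WP_def by blast+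
  then have "WP (set (zip ts ss))" unfolding WP_def by (auto dest: set_zip_leftD set_zip_rightD)
  moreover have "min d (simH R f g) \<le> 1" using d by simp
  moreover have "(c \<le> d \<and> c \<le> simR R (app \<tau> (App f ts)) (app \<tau> (App g ss))) \<longleftrightarrow>
         (c \<le> min d (simH R f g) \<and> (\<forall>l r. (l, r) \<in> set (zip ts ss) \<longrightarrow> c \<le> simR R (app \<tau> l) (app \<tau> r)))"
    for \<tau> c
  proof -
    have "c \<le> simRs R (map (app \<tau>) ts) (map (app \<tau>) ss) \<longleftrightarrow>
          c \<le> 1 \<and> (\<forall>(a, b)\<in>set (zip (map (app \<tau>) ts) (map (app \<tau>) ss)). c \<le> simR R a b)"
      using simRs_ge[of "map (app \<tau>) ts" "map (app \<tau>) ss"] Dec(2) by simp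
    also have "(\<forall>(a, b)\<in>set (zip (map (app \<tau>) ts) (map (app \<tau>) ss)). c \<le> simR R a b) \<longleftrightarrow>
        (\<forall>l r. (l, r) \<in> set (zip ts ss) \<longrightarrow> c \<le> simR R (app \<tau> l) (app \<tau> r))"
      by (auto simp: zip_map_map)
    finally show ?thesis using d by auto
  qed
  ultimately show ?case using HI_replace[OF hi Dec(1)] Dec(3) by blast
next
  case (SV F xs ys P Tx ps H \<sigma> \<theta> d)
  have hi: "HI R \<mu> t0 s0 (P, \<sigma>, d)" using SV(11) .
  then have WPP: "WP P" unfolding HI_def by auto
  have wfe: "wfa (FApp F xs)" using WPP SV(1) unfolding WP_def by blast
  then have lenTx: "length Tx = length xs" using SV(3) by simp
  define U where "U = lams Tx (FApp H (map (\<lambda>p. length xs - 1 - p) ps))"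
  have th: "\<theta> = [F \<mapsto> U]" using SV(7) U_def by simp
  have psl: "p < length xs" if "p \<in> set ps" for p using that SV(4) by auto
  have gth: "good \<theta>"
  proof -
    have "lbnd 0 U" unfolding U_def using lenTx psl by fastforce
    moreover have "wfa U" unfolding U_def using SV(6) by simp
    ultimately show ?thesis unfolding good_def th U_def using SV(3) by auto
  qed
  have rl0: "rho zs (length zs - 1 - p) = zs ! p" if "p < length zs" for zs p
  proof -
    have a: "length zs - 1 - p < length zs" using that by linarith
    have b: "length zs - 1 - (length zs - 1 - p) = p" using that by linarith
    show ?thesis using rho_lt[OF a] b by simp
  qed
  have rl: "rho zs (length zs - Suc p) = zs ! p" if "p < length zs" for zs p
    using rl0[OF that] by simp
  have "app \<theta> (FApp F xs) = FApp H (map (\<lambda>p. xs ! p) ps)"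
    using th lenTx psl rl by (simp add: U_def inst_lams)
  moreover have "app \<theta> (FApp F ys) = FApp H (map (\<lambda>p. ys ! p) ps)"
    using th lenTx psl rl SV(2) by (simp add: U_def inst_lams)
  moreover have "map (\<lambda>p. xs ! p) ps = map (\<lambda>p. ys ! p) ps" using SV(4) by simp
  ultimately have "app \<theta> (FApp F xs) = app \<theta> (FApp F ys)" by simp
  from HI_subst[OF SV(8,9,10) hi SV(1) gth this] show ?case .
next
  case (Ori a ss F xs P \<sigma> d)
  have hi: "HI R \<mu> t0 s0 (P, \<sigma>, d)" using Ori(6) .
  then have WPP: "WP P" and d: "\<mu> \<le> d" "d \<le> 1" unfolding HI_def by auto
  have "WP {(FApp F xs, App a ss)}" using WPP Ori(1) unfolding WP_def by fastforce
  moreover have "(c \<le> d \<and> c \<le> simR R (app \<tau> (App a ss)) (app \<tau> (FApp F xs))) \<longleftrightarrow>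
         (c \<le> d \<and> (\<forall>l r. (l, r) \<in> {(FApp F xs, App a ss)} \<longrightarrow> c \<le> simR R (app \<tau> l) (app \<tau> r)))"
    for \<tau> c using simR_sym[OF Ori(3)] by auto
  ultimately have "HI R \<mu> t0 s0 ({(FApp F xs, App a ss)} \<union> (P - {(App a ss, FApp F xs)}), \<sigma>, d)"
    using HI_replace[OF hi Ori(1) _ d] by blast
  then show ?case by simp
next
  case (LF F xs r P \<sigma> \<phi> \<theta> d)
  have hi: "HI R \<mu> t0 s0 (P, \<sigma>, d)" using LF(9) .
  then have WPP: "WP P" unfolding HI_def by auto
  have wfe: "wfa (FApp F xs)" "wfa r" using WPP LF(1) unfolding WP_def by blast+
  have ve: "good \<phi>" "app \<phi> (FApp F xs) = app \<phi> r"
    using var_elim_sound[OF LF(4) LF(2) wfe] by auto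
  have gth: "good \<theta>" using ve(1) LF(5) unfolding good_def by (auto simp: restrict_map_def split: if_splits)
  have "app \<theta> (FApp F xs) = app \<phi> (FApp F xs)" by (rule app_cong) (simp add: LF(5))
  moreover have "app \<theta> r = app \<phi> r" by (rule app_cong) (simp add: LF(5))
  ultimately have "app \<theta> (FApp F xs) = app \<theta> r" using ve(2) by simp
  from HI_subst[OF LF(6,7,8) hi LF(1) gth this] show ?case .
qed

lemma wt_wfa: "wt \<Gamma> t T \<Longrightarrow> wfa t"
proof (induction rule: wt.induct)
  case (wt_Cn c Ts b \<Gamma> ts)
  then show ?case by (auto simp: list_all2_conv_all_nth in_set_conv_nth)
next
  case (wt_Bv i \<Gamma> Ts b ts)
  then show ?case by (auto simp: list_all2_conv_all_nth in_set_conv_nth)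
qed (auto simp: arrows_def[symmetric])



theorem theorem3:
  fixes R :: "const \<Rightarrow> const \<Rightarrow> real" and \<mu> d :: real
    and t s :: tm and T :: ty and \<sigma> :: sub
  assumes "similarity R"
    and "0 < \<mu>" and "\<mu> \<le> 1"
    and "hopattern t T" and "hopattern s T"
    and "(hopsu_step R \<mu>)\<^sup>*\<^sup>* ({(t, s)}, Map.empty, 1) ({}, \<sigma>, d)"
  shows "d \<ge> \<mu> \<and> simR R (app \<sigma> t) (app \<sigma> s) = d"
proof -
  have wt: "wfa t" "wfa s" using assms(4,5) wt_wfa unfolding hopattern_def by blast+
  have init: "HI R \<mu> t s ({(t, s)}, Map.empty, 1)"
    unfolding HI_def using wt assms(3) simR_le1[OF assms(1)]
    by (auto simp: WP_def intro: order.trans)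
  have "HI R \<mu> t s ({}, \<sigma>, d)"
    using assms(6) init
  proof (induction rule: rtranclp_induct)
    case base then show ?case by simp
  next
    case (step y z)
    then show ?case using hopsu_inv[OF step(2) assms(1) wt] by blast
  qed
  then have d: "\<mu> \<le> d" and H: "\<forall>\<tau>. good \<tau> \<longrightarrow> (\<forall>c. c \<le> simR R (app \<tau> (app \<sigma> t)) (app \<tau> (app \<sigma> s)) \<longleftrightarrow> c \<le> d)"
    unfolding HI_def by auto
  have eqv: "c \<le> simR R (app \<sigma> t) (app \<sigma> s) \<longleftrightarrow> c \<le> d" for c
    using H[rule_format, OF good_empty, of c] by simp
  have "simR R (app \<sigma> t) (app \<sigma> s) = d"
    using eqv[of d] eqv[of "simR R (app \<sigma> t) (app \<sigma> s)"] by simp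
  then show ?thesis using d by simp
qed

end
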